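(* Let $\mathbf{B}$, $\mathbf{B}^*$, $\psi=\exists u_1\ldots\exists u_n\,\theta$, $\theta'$ and $\alpha$ be as in the context, and let $f\colon\{y_0,y_1,y_2,y_3\}\to B$ be a nontrivial assignment. Then $$\mathbf{B},f\models \exists x_0\ldots\exists x_3\,\exists w_0\ldots\exists w_3\,\exists u_1\ldots\exists u_n\,(\alpha\wedge\theta')$$ if and only if $\mathbf{B}^*\models\psi$.
   Context: The bowtie poset $\mathbf{B}$ has universe $B=\{0,1,2,3\}$ with order $0<1$, $0<3$, $2<1$, $2<3$ (plus reflexivity), and no other strict comparabilities. $\mathbf{B}^*$ is the structure over the vocabulary $\{\le,c_0,c_1,c_2,c_3\}$ ($c_i$ constant symbols) whose $\{\le\}$-reduct is $\mathbf{B}$ and with $c_i^{\mathbf{B}^*}=i$ for $i\in\{0,1,2,3\}$. $\psi=\exists u_1\ldots\exists u_n\,\theta$ is a sentence over $\{\le,c_0,\ldots,c_3\}$, where $\theta$ is a conjunction of atoms $t\le t'$ with $t,t'\in\{u_1,\dots,u_n,c_0,\dots,c_3\}$; $\theta'$ is obtained from $\theta$ by replacing each constant $c_i$ by the variable $w_i$. The variables $x_i,y_i,w_i$ ($i\in\{0,1,2,3\}$) are twelve fresh variables distinct from $u_1,\dots,u_n$. For sets of variables $S,S'$, $S\le S'$ abbreviates the conjunction of all atoms $s\le s'$ with $(s,s')\in S\times S'$. The formula $\alpha$ is $$\{w_0,w_2\}\le\{w_1,w_3\}\ \wedge\ \bigwedge_{j\in\{0,2\}}\{x_j\}\le\{y_j,w_j\}\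 \wedge\ \bigwedge_{j\in\{1,3\}}\{y_j,w_j\}\le\{x_j\}.$$ An assignment $f\colon\{y_0,y_1,y_2,y_3\}\to B$ is nontrivial if $\{f(y_0),f(y_2)\}=\{0,2\}$ and $\{f(y_1),f(y_3)\}=\{1,3\}$. *)

theory Defs
  imports Main
begin

definition bowtie :: "nat set" where
  "bowtie = {0,1,2,3}"

definition ble :: "nat \<Rightarrow> nat \<Rightarrow> bool" where
  "ble a b \<longleftrightarrow> a \<in> bowtie \<and> b \<in> bowtie \<and> (a = b \<or> (a \<in> {0,2} \<and> b \<in> {1,3}))"

text \<open>Terms of psi: a variable u_j or a constant symbol c_i.\<close>
datatype trm = TU nat | TC nat

datatype var = X nat | Y nat | W nat | U nat

text \<open>A conjunction of atoms t \<le> t' is represented as a list of pairs (t, t').\<close>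
type_synonym conj = "(trm \<times> trm) list"
type_synonym vconj = "(var \<times> var) list"

definition wf_theta :: "nat \<Rightarrow> conj \<Rightarrow> bool" where
  "wf_theta n \<theta> \<longleftrightarrow> (\<forall>(t, t') \<in> set \<theta>. \<forall>s \<in> {t, t'}.
      (\<forall>j. s = TU j \<longrightarrow> 1 \<le> j \<and> j \<le> n) \<and> (\<forall>i. s = TC i \<longrightarrow> i < 4))"

fun eval_trm :: "(nat \<Rightarrow> nat) \<Rightarrow> trm \<Rightarrow> nat" where
  "eval_trm g (TU j) = g j"
| "eval_trm g (TC i) = i"

definition Bstar_models :: "nat \<Rightarrow> conj \<Rightarrow> bool" where
  "Bstar_models n \<theta> \<longleftrightarrow> (\<exists>g. (\<forall>j \<in> {1..n}. g j \<in> bowtie) \<and>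
      (\<forall>(t, t') \<in> set \<theta>. ble (eval_trm g t) (eval_trm g t')))"

fun trm_to_var :: "trm \<Rightarrow> var" where
  "trm_to_var (TU j) = U j"
| "trm_to_var (TC i) = W i"

definition theta' :: "conj \<Rightarrow> vconj" where
  "theta' \<theta> = map (\<lambda>(t, t'). (trm_to_var t, trm_to_var t')) \<theta>"

definition alpha :: vconj where
  "alpha =
     [(W 0, W 1), (W 0, W 3), (W 2, W 1), (W 2, W 3),
      (X 0, Y 0), (X 0, W 0), (X 2, Y 2), (X 2, W 2),
      (Y 1, X 1), (W 1, X 1), (Y 3, X 3), (W 3, X 3)]"

definition B_models_ext :: "nat \<Rightarrow> (nat \<Rightarrow> nat) \<Rightarrow> conj \<Rightarrow> bool" where
  "B_models_ext n f \<theta> \<longleftrightarrow> (\<exists>h. (\<forall>i < 4. h (X i) \<in> bowtie \<and> h (W i) \<in> bowtie) \<and>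
      (\<forall>j \<in> {1..n}. h (U j) \<in> bowtie) \<and> (\<forall>i < 4. h (Y i) = f i) \<and>
      (\<forall>(a, b) \<in> set (alpha @ theta' \<theta>). ble (h a) (h b)))"

definition nontrivial :: "(nat \<Rightarrow> nat) \<Rightarrow> bool" where
  "nontrivial f \<longleftrightarrow> {f 0, f 2} = {0, 2} \<and> {f 1, f 3} = {1, 3}"

end

theory Submission imports Defs begin
definition sig :: "(nat \<Rightarrow> nat) \<Rightarrow> nat \<Rightarrow> nat" where
  "sig f x = (if x = 0 then f 0 else if x = 1 then f 1 else if x = 2 then f 2
              else if x = 3 then f 3 else x)"

lemma ble_alt: "ble a b \<longleftrightarrow> (a, b) \<in> {(0,0),(1,1),(2,2),(3,3),(0,1),(0,3),(2,1),(2,3)}"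
  unfolding ble_def bowtie_def by auto

lemma nt_cases:
  assumes "nontrivial f"
  shows "(f 0 = 0 \<and> f 2 = 2 \<or> f 0 = 2 \<and> f 2 = 0) \<and> (f 1 = 1 \<and> f 3 = 3 \<or> f 1 = 3 \<and> f 3 = 1)"
  using assms unfolding nontrivial_def by (auto simp: doubleton_eq_iff)

lemma sig_ble:
  assumes "nontrivial f"
  shows "ble (sig f a) (sig f b) = ble a b"
proof -
  have "a = 0 \<or> a = 1 \<or> a = 2 \<or> a = 3 \<or> a > 3" "b = 0 \<or> b = 1 \<or> b = 2 \<or> b = 3 \<or> b > 3" by auto
  then show ?thesis using nt_cases[OF assms] unfolding ble_alt sig_def
    by (elim disjE conjE; simp)
qed
lemma sig_sig:
  assumes "nontrivial f"
  shows "sig f (sig f a) = a"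
proof -
  have "a = 0 \<or> a = 1 \<or> a = 2 \<or> a = 3 \<or> a > 3" by auto
  then show ?thesis using nt_cases[OF assms] unfolding sig_def
    by (elim disjE conjE; simp)
qed

lemma sig_bow:
  assumes "nontrivial f" "a \<in> bowtie"
  shows "sig f a \<in> bowtie"
proof -
  have "a = 0 \<or> a = 1 \<or> a = 2 \<or> a = 3" using assms(2) by (auto simp: bowtie_def)
  then show ?thesis using nt_cases[OF assms(1)] unfolding sig_def bowtie_def
    by (elim disjE conjE; simp)
qed

lemma ble_min: "ble a b \<Longrightarrow> b = 0 \<or> b = 2 \<Longrightarrow> a = b"
  unfolding ble_alt by auto
lemma ble_max: "ble a b \<Longrightarrow> a = 1 \<or> a = 3 \<Longrightarrow> b = a"
  unfolding ble_alt by auto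
lemma ble_lo: "ble a b \<Longrightarrow> b = 1 \<or> b = 3 \<or> b = a"
  unfolding ble_alt by auto
lemma ble_hi: "ble a b \<Longrightarrow> a = 0 \<or> a = 2 \<or> a = b"
  unfolding ble_alt by auto

lemma W_eq:
  assumes "nontrivial f"
    and "\<forall>i < 4. h (Y i) = f i"
    and "\<forall>(a, b) \<in> set alpha. ble (h a) (h b)"
  shows "h (W 0) = f 0 \<and> h (W 1) = f 1 \<and> h (W 2) = f 2 \<and> h (W 3) = f 3"
proof -
  have y: "h (Y 0) = f 0" "h (Y 1) = f 1" "h (Y 2) = f 2" "h (Y 3) = f 3"
    using assms(2) by auto
  have a: "ble (h (W 0)) (h (W 1))" "ble (h (W 0)) (h (W 3))" "ble (h (W 2)) (h (W 1))"
    "ble (h (W 2)) (h (W 3))" "ble (h (X 0)) (h (Y 0))" "ble (h (X 0)) (h (W 0))"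
    "ble (h (X 2)) (h (Y 2))" "ble (h (X 2)) (h (W 2))" "ble (h (Y 1)) (h (X 1))"
    "ble (h (W 1)) (h (X 1))" "ble (h (Y 3)) (h (X 3))" "ble (h (W 3)) (h (X 3))"
    using assms(3) unfolding alpha_def by auto
  note nt = nt_cases[OF assms(1)]
  have x0: "h (X 0) = f 0" using ble_min[OF a(5)] nt y by auto
  have x2: "h (X 2) = f 2" using ble_min[OF a(7)] nt y by auto
  have x1: "h (X 1) = f 1" using ble_max[OF a(9)] nt y by auto
  have x3: "h (X 3) = f 3" using ble_max[OF a(11)] nt y by auto
  have w1: "h (W 1) = f 1 \<or> h (W 1) = 0 \<or> h (W 1) = 2" using ble_hi[OF a(10)] nt x1 by auto
  have w3: "h (W 3) = f 3 \<or> h (W 3) = 0 \<or> h (W 3) = 2" using ble_hi[OF a(12)] nt x3 by auto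
  have w0: "h (W 0) = f 0 \<or> h (W 0) = 1 \<or> h (W 0) = 3" using ble_lo[OF a(6)] nt x0 by auto
  have w2: "h (W 2) = f 2 \<or> h (W 2) = 1 \<or> h (W 2) = 3" using ble_lo[OF a(8)] nt x2 by auto
  have "h (W 0) = f 0"
  proof (rule ccontr)
    assume "h (W 0) \<noteq> f 0"
    then have m: "h (W 0) = 1 \<or> h (W 0) = 3" using w0 by auto
    have "h (W 1) = h (W 0)" using ble_max[OF a(1) m] .
    moreover have "h (W 3) = h (W 0)" using ble_max[OF a(2) m] .
    ultimately show False using w1 w3 m nt by auto
  qed
  moreover have "h (W 2) = f 2"
  proof (rule ccontr)
    assume "h (W 2) \<noteq> f 2"
    then have m: "h (W 2) = 1 \<or> h (W 2) = 3" using w2 by auto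
    have "h (W 1) = h (W 2)" using ble_max[OF a(3) m] .
    moreover have "h (W 3) = h (W 2)" using ble_max[OF a(4) m] .
    ultimately show False using w1 w3 m nt by auto
  qed
  moreover have "h (W 1) = f 1"
  proof (rule ccontr)
    assume "h (W 1) \<noteq> f 1"
    then have m: "h (W 1) = 0 \<or> h (W 1) = 2" using w1 by auto
    have "h (W 0) = h (W 1)" using ble_min[OF a(1) m] .
    moreover have "h (W 2) = h (W 1)" using ble_min[OF a(3) m] .
    ultimately show False using w0 w2 m nt by auto
  qed
  moreover have "h (W 3) = f 3"
  proof (rule ccontr)
    assume "h (W 3) \<noteq> f 3"
    then have m: "h (W 3) = 0 \<or> h (W 3) = 2" using w3 by auto
    have "h (W 0) = h (W 3)" using ble_min[OF a(2) m] .
    moreover have "h (W 2) = h (W 3)" using ble_min[OF a(4) m] .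
    ultimately show False using w0 w2 m nt by auto
  qed
  ultimately show ?thesis by simp
qed

lemma sig_small: "i < 4 \<Longrightarrow> sig f i = f i"
proof -
  assume "i < 4"
  then have "i = 0 \<or> i = 1 \<or> i = 2 \<or> i = 3" by auto
  then show ?thesis unfolding sig_def by auto
qed

lemma small_bow: "i < (4::nat) \<Longrightarrow> i \<in> bowtie"
proof -
  assume "i < 4"
  then have "i = 0 \<or> i = 1 \<or> i = 2 \<or> i = 3" by auto
  then show ?thesis unfolding bowtie_def by auto
qed

lemma alpha_ok:
  assumes "nontrivial f" and "\<And>i. k (X i) = e i" "\<And>i. k (W i) = e i" "\<And>i. k (Y i) = e i"
    and "e 0 = f 0" "e 1 = f 1" "e 2 = f 2" "e 3 = f 3"
  shows "\<forall>(a, b) \<in> set alpha. ble (k a) (k b)"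
proof -
  have "ble (f 0) (f 1) \<and> ble (f 0) (f 3) \<and> ble (f 2) (f 1) \<and> ble (f 2) (f 3) \<and> ble (f 0) (f 0)
     \<and> ble (f 2) (f 2) \<and> ble (f 1) (f 1) \<and> ble (f 3) (f 3)"
    using nt_cases[OF assms(1)] by (elim disjE conjE; simp add: ble_alt)
  then show ?thesis unfolding alpha_def using assms(2-8) by simp
qed

lemma trm_sig:
  assumes "nontrivial f" and "\<forall>j. s = TU j \<longrightarrow> 1 \<le> j \<and> j \<le> n" and "\<forall>i. s = TC i \<longrightarrow> i < 4"
    and "\<forall>i<4. h (W i) = f i" and "g = (\<lambda>j. sig f (h (U j)))"
  shows "sig f (eval_trm g s) = h (trm_to_var s)"
proof (cases s)
  case (TU j)
  then show ?thesis using assms(5) sig_sig[OF assms(1)] by simp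
next
  case (TC i)
  then have "i < 4" using assms(3) by simp
  then have "i = 0 \<or> i = 1 \<or> i = 2 \<or> i = 3" by auto
  then have "sig f i = f i" unfolding sig_def by auto
  then show ?thesis using TC assms(4) \<open>i < 4\<close> by simp
qed

theorem claim4:
  fixes n :: nat and \<theta> :: conj and f :: "nat \<Rightarrow> nat"
  assumes "wf_theta n \<theta>"
    and "\<forall>i < 4. f i \<in> bowtie"
    and "nontrivial f"
  shows "B_models_ext n f \<theta> \<longleftrightarrow> Bstar_models n \<theta>"
proof
  assume "B_models_ext n f \<theta>"
  then obtain h where hb: "\<forall>i < 4. h (X i) \<in> bowtie \<and> h (W i) \<in> bowtie"
    and hu: "\<forall>j \<in> {1..n}. h (U j) \<in> bowtie" and hy: "\<forall>i < 4. h (Y i) = f i"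
    and ha: "\<forall>(a, b) \<in> set (alpha @ theta' \<theta>). ble (h a) (h b)"
    unfolding B_models_ext_def by blast
  have w4: "h (W 0) = f 0 \<and> h (W 1) = f 1 \<and> h (W 2) = f 2 \<and> h (W 3) = f 3"
    using W_eq[OF assms(3) hy] ha[unfolded set_append ball_Un] by blast
  have w: "\<forall>i<4. h (W i) = f i"
  proof (intro allI impI)
    fix i :: nat assume "i < 4"
    then have "i = 0 \<or> i = 1 \<or> i = 2 \<or> i = 3" by auto
    then show "h (W i) = f i" using w4 by auto
  qed
  define g where "g = (\<lambda>j. sig f (h (U j)))"
  show "Bstar_models n \<theta>"
    unfolding Bstar_models_def
  proof (intro exI conjI ballI)
    fix j assume "j \<in> {1..n}" then show "g j \<in> bowtie"
      using hu sig_bow[OF assms(3)] g_def by auto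
  next
    fix p assume p: "p \<in> set \<theta>"
    obtain t t' where pt: "p = (t, t')" by (cases p)
    have wt: "\<forall>s \<in> {t, t'}. (\<forall>j. s = TU j \<longrightarrow> 1 \<le> j \<and> j \<le> n) \<and> (\<forall>i. s = TC i \<longrightarrow> i < 4)"
      using assms(1) p pt unfolding wf_theta_def by fastforce
    have "(trm_to_var t, trm_to_var t') \<in> set (theta' \<theta>)"
      using p pt unfolding theta'_def by force
    then have "ble (h (trm_to_var t)) (h (trm_to_var t'))" using ha[unfolded set_append ball_Un] by blast
    moreover have "sig f (eval_trm g t) = h (trm_to_var t)"
      using trm_sig[OF assms(3) _ _ w g_def] wt by auto
    moreover have "sig f (eval_trm g t') = h (trm_to_var t')"
      using trm_sig[OF assms(3) _ _ w g_def] wt by auto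
    ultimately have "ble (eval_trm g t) (eval_trm g t')"
      using sig_ble[OF assms(3)] by metis
    then show "case p of (t, t') \<Rightarrow> ble (eval_trm g t) (eval_trm g t')" using pt by simp
  qed
next
  assume "Bstar_models n \<theta>"
  then obtain g where gb: "\<forall>j \<in> {1..n}. g j \<in> bowtie"
    and gt: "\<forall>(t, t') \<in> set \<theta>. ble (eval_trm g t) (eval_trm g t')"
    unfolding Bstar_models_def by blast
  define h where "h = (\<lambda>v. case v of X i \<Rightarrow> sig f i | Y i \<Rightarrow> sig f i | W i \<Rightarrow> sig f i
                                | U j \<Rightarrow> sig f (g j))"
  have htv: "h (trm_to_var s) = sig f (eval_trm g s)" for s
    by (cases s) (auto simp: h_def)
  have s4: "sig f 0 = f 0" "sig f 1 = f 1" "sig f 2 = f 2" "sig f 3 = f 3"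
    by (auto simp: sig_def)
  show "B_models_ext n f \<theta>"
    unfolding B_models_ext_def
  proof (intro exI conjI)
    show "\<forall>i < 4. h (X i) \<in> bowtie \<and> h (W i) \<in> bowtie"
      using sig_bow[OF assms(3) small_bow] by (simp add: h_def)
    show "\<forall>j \<in> {1..n}. h (U j) \<in> bowtie"
      using sig_bow[OF assms(3)] gb by (simp add: h_def)
    show "\<forall>i < 4. h (Y i) = f i"
      by (simp add: h_def sig_small)
    show "\<forall>(a, b) \<in> set (alpha @ theta' \<theta>). ble (h a) (h b)"
    proof
      fix p assume "p \<in> set (alpha @ theta' \<theta>)"
      then consider "p \<in> set alpha" | "p \<in> set (theta' \<theta>)" by auto
      then show "case p of (a, b) \<Rightarrow> ble (h a) (h b)"
      proof cases
        case 1
        have "\<forall>(a, b) \<in> set alpha. ble (h a) (h b)"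
          by (rule alpha_ok[OF assms(3), of h "sig f"]) (simp_all add: h_def sig_def)
        then show ?thesis using 1 by auto
      next
        case 2
        then obtain t t' where "(t, t') \<in> set \<theta>" "p = (trm_to_var t, trm_to_var t')"
          unfolding theta'_def by auto
        then have "ble (eval_trm g t) (eval_trm g t')" using gt by blast
        then have "ble (h (trm_to_var t)) (h (trm_to_var t'))" unfolding htv sig_ble[OF assms(3)] .
        then show ?thesis using \<open>p = _\<close> by simp
      qed
    qed
  qed
qed

end
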